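(* Let $\Omega\subset\mathbb{R}^2$ be a domain and $u\in C^{2}(\Omega)$. Let $S(u)=\{(x,y)\in\Omega:u_x-y=0,\ u_y+x=0\}$, on $\Omega\setminus S(u)$ let $D=\sqrt{(u_x-y)^2+(u_y+x)^2}$, $N(u)=(u_x-y,u_y+x)/D$, $N^\perp(u)=(u_y+x,-(u_x-y))/D$, and $H=\operatorname{div}N(u)$. Let $p_0\in S(u)$ be an isolated point of $S(u)$ and suppose $|H(p)|=o(1/r(p))$ as $p\to p_0$, where $r(p)=|p-p_0|$. Consider the $C^1$ vector field $N^\perp D=(u_y+x,\,-u_x+y)$ on $\Omega$ as a map $\Omega\to\mathbb{R}^2$. Then the differential $d(N^\perp D)_{p_0}$ is the identity linear transformation, the index of $N^\perp D$ at its isolated zero $p_0$ is $+1$, and $u_{xx}=u_{xy}=u_{yy}=0$ at $p_0$. *)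

theory Defs
  imports "HOL-Complex_Analysis.Complex_Analysis" "HOL-Library.Landau_Symbols"
begin

text \<open>The plane R^2 is modelled by the complex numbers: a point (x,y) is
  the complex number x + i y, so x = Re z and y = Im z.\<close>

definition px :: "(complex \<Rightarrow> real) \<Rightarrow> complex \<Rightarrow> real" where
  "px f z = frechet_derivative f (at z) 1"

definition py :: "(complex \<Rightarrow> real) \<Rightarrow> complex \<Rightarrow> real" where
  "py f z = frechet_derivative f (at z) \<i>"

definition C2_on :: "complex set \<Rightarrow> (complex \<Rightarrow> real) \<Rightarrow> bool" where
  "C2_on \<Omega> u \<longleftrightarrow>
     (\<forall>z\<in>\<Omega>. u differentiable (at z)) \<and>
     (\<forall>z\<in>\<Omega>. px u differentiable (at z)) \<and>
     (\<forall>z\<in>\<Omega>. py u differentiable (at z)) \<and>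
     continuous_on \<Omega> (px (px u)) \<and> continuous_on \<Omega> (py (px u)) \<and>
     continuous_on \<Omega> (px (py u)) \<and> continuous_on \<Omega> (py (py u))"

definition Sset :: "complex set \<Rightarrow> (complex \<Rightarrow> real) \<Rightarrow> complex set" where
  "Sset \<Omega> u = {z \<in> \<Omega>. px u z - Im z = 0 \<and> py u z + Re z = 0}"

definition Dfun :: "(complex \<Rightarrow> real) \<Rightarrow> complex \<Rightarrow> real" where
  "Dfun u z = sqrt ((px u z - Im z)^2 + (py u z + Re z)^2)"

text \<open>H = div N(u), N(u) = (u_x - y, u_y + x)/D  (meaningful off S(u)).\<close>
definition Hfun :: "(complex \<Rightarrow> real) \<Rightarrow> complex \<Rightarrow> real" where
  "Hfun u z = px (\<lambda>w. (px u w - Im w) / Dfun u w) z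
            + py (\<lambda>w. (py u w + Re w) / Dfun u w) z"

definition NperpD :: "(complex \<Rightarrow> real) \<Rightarrow> complex \<Rightarrow> complex" where
  "NperpD u z = Complex (py u z + Re z) (- px u z + Im z)"

definition vf_index_eq :: "(complex \<Rightarrow> complex) \<Rightarrow> complex \<Rightarrow> int \<Rightarrow> bool" where
  "vf_index_eq V p k \<longleftrightarrow>
     (\<exists>\<epsilon>>0. \<forall>r. 0 < r \<and> r < \<epsilon> \<longrightarrow> winding_number (V \<circ> circlepath p r) 0 = of_int k)"

end

theory Submission
  imports Defs
begin

lemma pd_has_derivative:
  fixes f :: "complex \<Rightarrow> real"
  assumes "f differentiable (at z)"
  shows "(f has_derivative (\<lambda>h. Re h * px f z + Im h * py f z)) (at z)"
proof -
  have d: "(f has_derivative frechet_derivative f (at z)) (at z)"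
    using assms frechet_derivative_works by blast
  then have lin: "linear (frechet_derivative f (at z))"
    using has_derivative_linear by blast
  have "frechet_derivative f (at z) h = Re h * px f z + Im h * py f z" for h
  proof -
    have "h = Re h *\<^sub>R 1 + Im h *\<^sub>R \<i>"
      by (simp add: complex_eq_iff)
    then have "frechet_derivative f (at z) h = frechet_derivative f (at z) (Re h *\<^sub>R 1 + Im h *\<^sub>R \<i>)"
      by simp
    also have "\<dots> = Re h * px f z + Im h * py f z"
      using lin unfolding px_def py_def
      by (simp add: linear_add linear_scale)
    finally show ?thesis .
  qed
  then have "frechet_derivative f (at z) = (\<lambda>h. Re h * px f z + Im h * py f z)" by (rule ext)
  then show ?thesis using d by simp
qed


lemma deriv_line:
  fixes u :: "complex \<Rightarrow> real"
  assumes "u differentiable (at (a + of_real t * w))"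
  shows "((\<lambda>t. u (a + of_real t * w)) has_real_derivative
          (Re w * px u (a + of_real t * w) + Im w * py u (a + of_real t * w))) (at t)"
proof -
  have l: "((\<lambda>t. a + of_real t * w) has_derivative (\<lambda>s. of_real s * w)) (at t)"
    by (auto intro!: derivative_eq_intros)
  have "((\<lambda>t. u (a + of_real t * w)) has_derivative
     (\<lambda>s. Re (of_real s * w) * px u (a + of_real t * w) + Im (of_real s * w) * py u (a + of_real t * w))) (at t)"
    using has_derivative_compose[OF l pd_has_derivative[OF assms]] by (simp add: o_def)
  moreover have "(\<lambda>s. Re (of_real s * w) * px u (a + of_real t * w) + Im (of_real s * w) * py u (a + of_real t * w))
     = (*) (Re w * px u (a + of_real t * w) + Im w * py u (a + of_real t * w))"
    by (rule ext) (simp add: algebra_simps)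
  ultimately show ?thesis by (simp add: has_field_derivative_def)
qed

lemma dist_add_self: "dist p (p + x) = norm (x::'a::real_normed_vector)"
  by (simp add: dist_norm)

lemma schwarz:
  fixes u :: "complex \<Rightarrow> real"
  assumes S: "open S" "p \<in> S" and du: "\<forall>z\<in>S. u differentiable (at z)"
    and dx: "px u differentiable (at p)" and dy: "py u differentiable (at p)"
  shows "py (px u) p = px (py u) p"
proof -
  define a where "a = px (px u) p"
  define b where "b = py (px u) p"
  define c where "c = px (py u) p"
  define d where "d = py (py u) p"
  have Dx: "(px u has_derivative (\<lambda>h. Re h * a + Im h * b)) (at p)"
    using pd_has_derivative[OF dx] unfolding a_def b_def .
  have Dy: "(py u has_derivative (\<lambda>h. Re h * c + Im h * d)) (at p)"
    using pd_has_derivative[OF dy] unfolding c_def d_def .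
  have main: "\<bar>b - c\<bar> \<le> 6 * e" if e: "e > 0" for e
  proof -
    obtain d1 where d1: "d1 > 0" "\<And>y. norm (y - p) < d1 \<Longrightarrow>
       \<bar>px u y - px u p - (Re (y - p) * a + Im (y - p) * b)\<bar> \<le> e * norm (y - p)"
      using Dx e unfolding has_derivative_at_alt by (metis real_norm_def)
    obtain d2 where d2: "d2 > 0" "\<And>y. norm (y - p) < d2 \<Longrightarrow>
       \<bar>py u y - py u p - (Re (y - p) * c + Im (y - p) * d)\<bar> \<le> e * norm (y - p)"
      using Dy e unfolding has_derivative_at_alt by (metis real_norm_def)
    obtain d0 where d0: "d0 > 0" "ball p d0 \<subseteq> S"
      using S openE by blast
    define h where "h = min d0 (min d1 d2) / 4"
    have h: "h > 0" "2 * h < d0" "2 * h < d1" "2 * h < d2"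
      using d0 d1 d2 by (auto simp: h_def)
    have nb: "norm (of_real s + \<i> * of_real t) \<le> 2 * h" if "0 \<le> s" "s \<le> h" "0 \<le> t" "t \<le> h" for s t
    proof -
      have "norm (of_real s + \<i> * of_real t) \<le> norm (of_real s :: complex) + norm (\<i> * of_real t)"
        by (rule norm_triangle_ineq)
      also have "\<dots> \<le> 2 * h" using that by (simp add: norm_mult)
      finally show ?thesis .
    qed
    have inS: "p + (of_real s + \<i> * of_real t) \<in> S" if "0 \<le> s" "s \<le> h" "0 \<le> t" "t \<le> h" for s t
    proof -
      have "dist p (p + (of_real s + \<i> * of_real t)) < d0"
        unfolding dist_add_self using nb[OF that] h by linarith
      then show ?thesis using d0 by auto
    qed
    define \<Delta> where "\<Delta> = u (p + (of_real h + \<i> * of_real h)) - u (p + (of_real h + \<i> * of_real 0))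
       - u (p + (of_real 0 + \<i> * of_real h)) + u (p + (of_real 0 + \<i> * of_real 0))"
    have est1: "\<bar>\<Delta> - h * h * b\<bar> \<le> 3 * e * h * h"
    proof -
      define \<phi> where "\<phi> t = u ((p + \<i> * of_real h) + of_real t * 1) - u (p + of_real t * 1)" for t
      define g where "g t = px u ((p + \<i> * of_real h) + of_real t * 1) - px u (p + of_real t * 1)" for t
      have der: "(\<phi> has_real_derivative g t) (at t)" if t0: "0 \<le> t" "t \<le> h" for t
      proof -
        have t: "0 \<le> t \<and> t \<le> h" using t0 by simp
        have a1: "u differentiable (at ((p + \<i> * of_real h) + of_real t * 1))"
        proof -
          have eq: "(p + \<i> * of_real h) + of_real t * 1 = p + (of_real t + \<i> * of_real h)" by (simp add: algebra_simps)
          have "p + (of_real t + \<i> * of_real h) \<in> S" by (rule inS) (use t h in auto)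
          then show ?thesis unfolding eq using du by blast
        qed
        have a2: "u differentiable (at (p + of_real t * 1))"
        proof -
          have eq: "p + of_real t * 1 = p + (of_real t + \<i> * of_real 0)" by (simp)
          have "p + (of_real t + \<i> * of_real 0) \<in> S" by (rule inS) (use t h in auto)
          then show ?thesis unfolding eq using du by blast
        qed
        show ?thesis
          unfolding \<phi>_def g_def using DERIV_diff[OF deriv_line[OF a1] deriv_line[OF a2]] by simp
      qed
      obtain \<xi> where xi0: "0 < \<xi>" "\<xi> < h" "\<phi> h - \<phi> 0 = (h - 0) * g \<xi>"
        using MVT2[OF h(1) der] by blast
      have xi: "0 < \<xi>" "\<xi> < h" "\<phi> h - \<phi> 0 = (h - 0) *
          (px u ((p + \<i> * of_real h) + of_real \<xi> * 1) - px u (p + of_real \<xi> * 1))" using xi0 unfolding g_def by auto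
      have "\<phi> h - \<phi> 0 = \<Delta>" unfolding \<phi>_def \<Delta>_def by (simp add: algebra_simps)
      define y1 where "y1 = p + (of_real \<xi> + \<i> * of_real h)"
      define y2 where "y2 = p + (of_real \<xi> + \<i> * of_real 0)"
      have n1: "norm (y1 - p) \<le> 2 * h" unfolding y1_def using nb[of \<xi> h] xi h by simp
      have n2: "norm (y2 - p) \<le> 2 * h" unfolding y2_def using nb[of \<xi> 0] xi h by simp
      have n2': "norm (y2 - p) \<le> h" unfolding y2_def using xi by simp
      have e1: "\<bar>px u y1 - px u p - (\<xi> * a + h * b)\<bar> \<le> e * (2 * h)"
      proof -
        have "norm (y1 - p) < d1" using n1 h by linarith
        then have A: "\<bar>px u y1 - px u p - (Re (y1 - p) * a + Im (y1 - p) * b)\<bar> \<le> e * norm (y1 - p)"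
          by (rule d1(2))
        have B: "e * norm (y1 - p) \<le> e * (2 * h)" using n1 e by (intro mult_left_mono) auto
        have C: "Re (y1 - p) * a + Im (y1 - p) * b = (\<xi> * a + h * b)" by (simp add: y1_def)
        show ?thesis using A B unfolding C by linarith
      qed
      have e2: "\<bar>px u y2 - px u p - (\<xi> * a)\<bar> \<le> e * h"
      proof -
        have "norm (y2 - p) < d1" using n2 h by linarith
        then have A: "\<bar>px u y2 - px u p - (Re (y2 - p) * a + Im (y2 - p) * b)\<bar> \<le> e * norm (y2 - p)"
          by (rule d1(2))
        have B: "e * norm (y2 - p) \<le> e * h" using n2' e by (intro mult_left_mono) auto
        have C: "Re (y2 - p) * a + Im (y2 - p) * b = (\<xi> * a)" by (simp add: y2_def)
        show ?thesis using A B unfolding C by linarith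
      qed
      have "\<Delta> = h * (px u y1 - px u y2)"
        using xi(3) \<open>\<phi> h - \<phi> 0 = \<Delta>\<close> unfolding y1_def y2_def by (simp add: algebra_simps)
      then have "\<Delta> - h * h * b = h * ((px u y1 - px u p - (\<xi> * a + h * b)) - (px u y2 - px u p - (\<xi> * a)))"
        by (simp add: algebra_simps)
      then have "\<bar>\<Delta> - h * h * b\<bar> = h * \<bar>(px u y1 - px u p - (\<xi> * a + h * b)) - (px u y2 - px u p - (\<xi> * a))\<bar>"
        using h by (simp add: abs_mult)
      also have "\<dots> \<le> h * (e * (2 * h) + e * h)"
        using e1 e2 h by (intro mult_left_mono) auto
      finally show ?thesis by (simp add: algebra_simps)
    qed
    have est2: "\<bar>\<Delta> - h * h * c\<bar> \<le> 3 * e * h * h"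
    proof -
      define \<phi> where "\<phi> t = u ((p + of_real h) + of_real t * \<i>) - u (p + of_real t * \<i>)" for t
      define g where "g t = py u ((p + of_real h) + of_real t * \<i>) - py u (p + of_real t * \<i>)" for t
      have der: "(\<phi> has_real_derivative g t) (at t)" if t0: "0 \<le> t" "t \<le> h" for t
      proof -
        have t: "0 \<le> t \<and> t \<le> h" using t0 by simp
        have a1: "u differentiable (at ((p + of_real h) + of_real t * \<i>))"
        proof -
          have eq: "(p + of_real h) + of_real t * \<i> = p + (of_real h + \<i> * of_real t)" by (simp add: algebra_simps)
          have "p + (of_real h + \<i> * of_real t) \<in> S" by (rule inS) (use t h in auto)
          then show ?thesis unfolding eq using du by blast
        qed
        have a2: "u differentiable (at (p + of_real t * \<i>))"
        proof -
          have eq: "p + of_real t * \<i> = p + (of_real 0 + \<i> * of_real t)" by (simp add: algebra_simps)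
          have "p + (of_real 0 + \<i> * of_real t) \<in> S" by (rule inS) (use t h in auto)
          then show ?thesis unfolding eq using du by blast
        qed
        show ?thesis
          unfolding \<phi>_def g_def using DERIV_diff[OF deriv_line[OF a1] deriv_line[OF a2]] by simp
      qed
      obtain \<xi> where xi0: "0 < \<xi>" "\<xi> < h" "\<phi> h - \<phi> 0 = (h - 0) * g \<xi>"
        using MVT2[OF h(1) der] by blast
      have xi: "0 < \<xi>" "\<xi> < h" "\<phi> h - \<phi> 0 = (h - 0) *
          (py u ((p + of_real h) + of_real \<xi> * \<i>) - py u (p + of_real \<xi> * \<i>))" using xi0 unfolding g_def by auto
      have "\<phi> h - \<phi> 0 = \<Delta>" unfolding \<phi>_def \<Delta>_def by (simp add: algebra_simps)
      define y1 where "y1 = p + (of_real h + \<i> * of_real \<xi>)"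
      define y2 where "y2 = p + (of_real 0 + \<i> * of_real \<xi>)"
      have n1: "norm (y1 - p) \<le> 2 * h" unfolding y1_def using nb[of h \<xi>] xi h by simp
      have n2: "norm (y2 - p) \<le> 2 * h" unfolding y2_def using nb[of 0 \<xi>] xi h by simp
      have n2': "norm (y2 - p) \<le> h" unfolding y2_def using xi by (simp add: norm_mult)
      have e1: "\<bar>py u y1 - py u p - (h * c + \<xi> * d)\<bar> \<le> e * (2 * h)"
      proof -
        have "norm (y1 - p) < d2" using n1 h by linarith
        then have A: "\<bar>py u y1 - py u p - (Re (y1 - p) * c + Im (y1 - p) * d)\<bar> \<le> e * norm (y1 - p)"
          by (rule d2(2))
        have B: "e * norm (y1 - p) \<le> e * (2 * h)" using n1 e by (intro mult_left_mono) auto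
        have C: "Re (y1 - p) * c + Im (y1 - p) * d = (h * c + \<xi> * d)" by (simp add: y1_def)
        show ?thesis using A B unfolding C by linarith
      qed
      have e2: "\<bar>py u y2 - py u p - (\<xi> * d)\<bar> \<le> e * h"
      proof -
        have "norm (y2 - p) < d2" using n2 h by linarith
        then have A: "\<bar>py u y2 - py u p - (Re (y2 - p) * c + Im (y2 - p) * d)\<bar> \<le> e * norm (y2 - p)"
          by (rule d2(2))
        have B: "e * norm (y2 - p) \<le> e * h" using n2' e by (intro mult_left_mono) auto
        have C: "Re (y2 - p) * c + Im (y2 - p) * d = (\<xi> * d)" by (simp add: y2_def)
        show ?thesis using A B unfolding C by linarith
      qed
      have "\<Delta> = h * (py u y1 - py u y2)"
        using xi(3) \<open>\<phi> h - \<phi> 0 = \<Delta>\<close> unfolding y1_def y2_def by (simp add: algebra_simps)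
      then have "\<Delta> - h * h * c = h * ((py u y1 - py u p - (h * c + \<xi> * d)) - (py u y2 - py u p - (\<xi> * d)))"
        by (simp add: algebra_simps)
      then have "\<bar>\<Delta> - h * h * c\<bar> = h * \<bar>(py u y1 - py u p - (h * c + \<xi> * d)) - (py u y2 - py u p - (\<xi> * d))\<bar>"
        using h by (simp add: abs_mult)
      also have "\<dots> \<le> h * (e * (2 * h) + e * h)"
        using e1 e2 h by (intro mult_left_mono) auto
      finally show ?thesis by (simp add: algebra_simps)
    qed
    have q1: "\<bar>h * h * b - h * h * c\<bar> \<le> 6 * e * h * h"
      using est1 est2 unfolding abs_le_iff by linarith
    have "h * h * b - h * h * c = (h * h) * (b - c)" by (simp add: algebra_simps)
    then have "\<bar>h * h * b - h * h * c\<bar> = (h * h) * \<bar>b - c\<bar>" by (simp add: abs_mult)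
    then have "h * h * \<bar>b - c\<bar> \<le> h * h * (6 * e)"
      using q1 by (simp add: algebra_simps)
    then show ?thesis using h by (simp add: mult_le_cancel_left_pos)
  qed
  have "\<bar>b - c\<bar> \<le> 0"
  proof (rule field_le_epsilon)
    fix e :: real assume "e > 0"
    then show "\<bar>b - c\<bar> \<le> 0 + e" using main[of "e/6"] by simp
  qed
  then show ?thesis unfolding b_def c_def by simp
qed


lemma F1_deriv:
  assumes "px u differentiable (at p)"
  shows "((\<lambda>w. px u w - Im w) has_derivative (\<lambda>h. Re h * px (px u) p + Im h * py (px u) p - Im h)) (at p)"
  using pd_has_derivative[OF assms] by (auto intro!: derivative_eq_intros)

lemma F2_deriv:
  assumes "py u differentiable (at p)"
  shows "((\<lambda>w. py u w + Re w) has_derivative (\<lambda>h. Re h * px (py u) p + Im h * py (py u) p + Re h)) (at p)"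
  using pd_has_derivative[OF assms] by (auto intro!: derivative_eq_intros)

lemma alg:
  fixes a b d g f1 f2 D :: real
  assumes "D*D = f1*f1 + f2*f2" "D > 0"
  shows "((a*D - f1*((f1*a + f2*(b+1))/D))/(D*D) + (d*D - f2*((f1*(g-1) + f2*d)/D))/(D*D)) * D
     = a*(f2/D)^2 + d*(f1/D)^2 - (b+g)*(f1/D)*(f2/D)"
proof -
  have D: "D \<noteq> 0" using assms by simp
  have "((a*D - f1*((f1*a + f2*(b+1))/D))/(D*D) + (d*D - f2*((f1*(g-1) + f2*d)/D))/(D*D)) * D
     = (a*(D*D) - f1*(f1*a + f2*(b+1)) + d*(D*D) - f2*(f1*(g-1) + f2*d)) / (D*D)"
    using D by (simp add: field_simps)
  also have "\<dots> = (a*(f2*f2) + d*(f1*f1) - (b+g)*f1*f2) / (D*D)"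
    unfolding assms(1) by (simp add: algebra_simps)
  also have "\<dots> = a*(f2/D)^2 + d*(f1/D)^2 - (b+g)*(f1/D)*(f2/D)"
    using D by (simp add: field_simps power2_eq_square)
  finally show ?thesis .
qed

lemma H_formula:
  assumes dx: "px u differentiable (at p)" and dy: "py u differentiable (at p)"
    and D0: "Dfun u p \<noteq> 0"
  shows "Hfun u p * Dfun u p =
     px (px u) p * ((py u p + Re p) / Dfun u p)^2 + py (py u) p * ((px u p - Im p) / Dfun u p)^2
     - (px (py u) p + py (px u) p) * ((px u p - Im p) / Dfun u p) * ((py u p + Re p) / Dfun u p)"
proof -
  define f1 where "f1 = px u p - Im p"
  define f2 where "f2 = py u p + Re p"
  define a where "a = px (px u) p"
  define g where "g = py (px u) p"
  define b where "b = px (py u) p"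
  define d where "d = py (py u) p"
  define D where "D = Dfun u p"
  have Dpos: "f1^2 + f2^2 > 0"
    using D0 unfolding Dfun_def f1_def f2_def
    by (metis add_nonneg_nonneg not_less order_antisym real_sqrt_zero zero_le_power2)
  have Dsq: "D^2 = f1^2 + f2^2" "D > 0"
    unfolding D_def Dfun_def f1_def[symmetric] f2_def[symmetric] using Dpos by auto
  have d1: "((\<lambda>w. px u w - Im w) has_derivative (\<lambda>h. Re h * a + Im h * g - Im h)) (at p)"
    unfolding a_def g_def by (rule F1_deriv[OF dx])
  have d2: "((\<lambda>w. py u w + Re w) has_derivative (\<lambda>h. Re h * b + Im h * d + Re h)) (at p)"
    unfolding b_def d_def by (rule F2_deriv[OF dy])
  note dS0 = has_derivative_add[OF has_derivative_mult[OF d1 d1] has_derivative_mult[OF d2 d2]]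
  have Dfe: "Dfun u = (\<lambda>w. sqrt ((px u w - Im w) * (px u w - Im w) + (py u w + Re w) * (py u w + Re w)))"
    unfolding Dfun_def[abs_def] power2_eq_square ..
  have sq: "sqrt ((px u p - Im p) * (px u p - Im p) + (py u p + Re p) * (py u p + Re p)) = D"
    unfolding D_def Dfun_def power2_eq_square ..
  have Dpos': "0 < (px u p - Im p) * (px u p - Im p) + (py u p + Re p) * (py u p + Re p)"
    using Dpos unfolding f1_def f2_def power2_eq_square .
  note dD = DERIV_compose_FDERIV[of sqrt _ "\<lambda>w. (px u w - Im w) * (px u w - Im w) + (py u w + Re w) * (py u w + Re w)" p,
     OF DERIV_real_sqrt[OF Dpos'] dS0]
  have dD': "(Dfun u has_derivative
     (\<lambda>h. (f1 * (Re h * a + Im h * g - Im h) + f2 * (Re h * b + Im h * d + Re h)) / D)) (at p)"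
  proof -
    have e: "(\<lambda>h. ((px u p - Im p) * (Re h * a + Im h * g - Im h) + (Re h * a + Im h * g - Im h) * (px u p - Im p) +
          ((py u p + Re p) * (Re h * b + Im h * d + Re h) + (Re h * b + Im h * d + Re h) * (py u p + Re p))) *
         (inverse (sqrt ((px u p - Im p) * (px u p - Im p) + (py u p + Re p) * (py u p + Re p))) / 2))
      = (\<lambda>h. (f1 * (Re h * a + Im h * g - Im h) + f2 * (Re h * b + Im h * d + Re h)) / D)"
      unfolding sq using Dsq(2) by (intro ext) (simp add: f1_def f2_def field_simps)
    show ?thesis using dD unfolding Dfe[symmetric] e .
  qed
  have q1: "((\<lambda>w. (px u w - Im w) / Dfun u w) has_derivative
      (\<lambda>h. ((Re h * a + Im h * g - Im h) * D - f1 * ((f1 * (Re h * a + Im h * g - Im h) + f2 * (Re h * b + Im h * d + Re h)) / D)) / (D * D))) (at p)"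
    using has_derivative_divide'[OF d1 dD' D0] unfolding D_def f1_def by simp
  have q2: "((\<lambda>w. (py u w + Re w) / Dfun u w) has_derivative
      (\<lambda>h. ((Re h * b + Im h * d + Re h) * D - f2 * ((f1 * (Re h * a + Im h * g - Im h) + f2 * (Re h * b + Im h * d + Re h)) / D)) / (D * D))) (at p)"
    using has_derivative_divide'[OF d2 dD' D0] unfolding D_def f2_def by simp
  have e1: "px (\<lambda>w. (px u w - Im w) / Dfun u w) p = (a * D - f1 * ((f1 * a + f2 * (b + 1)) / D)) / (D * D)"
  proof -
    have "px (\<lambda>w. (px u w - Im w) / Dfun u w) p = frechet_derivative (\<lambda>w. (px u w - Im w) / Dfun u w) (at p) 1"
      by (rule px_def)
    also have "\<dots> = (a * D - f1 * ((f1 * a + f2 * (b + 1)) / D)) / (D * D)"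
      unfolding frechet_derivative_at[OF q1, symmetric] by simp
    finally show ?thesis .
  qed
  have e2: "py (\<lambda>w. (py u w + Re w) / Dfun u w) p = (d * D - f2 * ((f1 * (g - 1) + f2 * d) / D)) / (D * D)"
  proof -
    have "py (\<lambda>w. (py u w + Re w) / Dfun u w) p = frechet_derivative (\<lambda>w. (py u w + Re w) / Dfun u w) (at p) \<i>"
      by (rule py_def)
    also have "\<dots> = (d * D - f2 * ((f1 * (g - 1) + f2 * d) / D)) / (D * D)"
      unfolding frechet_derivative_at[OF q2, symmetric] by simp
    finally show ?thesis .
  qed
  have H: "Hfun u p = (a * D - f1 * ((f1 * a + f2 * (b + 1)) / D)) / (D * D)
       + (d * D - f2 * ((f1 * (g - 1) + f2 * d) / D)) / (D * D)"
    unfolding Hfun_def e1 e2 ..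
  have "Hfun u p * D = a * (f2 / D)^2 + d * (f1 / D)^2 - (b + g) * (f1 / D) * (f2 / D)"
    unfolding H using alg[of D f1 f2 a b d g] Dsq by (simp add: power2_eq_square)
  then show ?thesis unfolding a_def g_def b_def d_def D_def f1_def f2_def .
qed


lemma quad_expand:
  fixes Q :: "complex \<Rightarrow> real"
  assumes Qd: "\<And>n. Q n = al * (Im n)^2 + de * (Re n)^2 - ka * Re n * Im n"
  shows "Q (m * w) = (Re w)^2 * Q m + Re w * Im w * (Q (m + \<i> * m) - Q m - Q (\<i> * m)) + (Im w)^2 * Q (\<i> * m)"
  unfolding Qd by (simp add: power2_eq_square algebra_simps)

lemma value_near_zero:
  fixes f :: "complex \<Rightarrow> real"
  assumes lim: "(f \<longlongrightarrow> 0) (at p0)"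
    and fr: "\<And>\<rho>. \<rho> > 0 \<Longrightarrow> \<exists>p. p \<noteq> p0 \<and> dist p p0 < \<rho> \<and> \<bar>f p\<bar> = k"
  shows "k = 0"
proof (rule ccontr)
  assume k: "k \<noteq> 0"
  have "k \<ge> 0" using fr[of 1] by auto
  with k have kp: "k > 0" by simp
  have "eventually (\<lambda>p. dist (f p) 0 < k) (at p0)"
    using lim kp tendsto_iff by blast
  then obtain d where d: "d > 0" "\<And>p. p \<noteq> p0 \<Longrightarrow> dist p p0 < d \<Longrightarrow> dist (f p) 0 < k"
    unfolding eventually_at by blast
  obtain p where "p \<noteq> p0" "dist p p0 < d" "\<bar>f p\<bar> = k" using fr[OF d(1)] by blast
  with d(2)[of p] show False by simp
qed


lemma ivt_punctured:
  fixes N :: "complex \<Rightarrow> complex"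
  assumes contN: "continuous_on (ball p0 r0 - {p0}) N"
    and ray1: "((\<lambda>t. N (p0 + of_real t * v)) \<longlongrightarrow> m) (at_right 0)"
    and ray2: "((\<lambda>t. N (p0 + of_real t * (- v))) \<longlongrightarrow> - m) (at_right 0)"
    and m: "cmod m = 1" and v: "v \<noteq> 0" and c: "-1 < c" "c < 1" and \<rho>: "0 < \<rho>" "\<rho> \<le> r0"
  shows "\<exists>p. p \<noteq> p0 \<and> dist p p0 < \<rho> \<and> Re (N p * cnj m) = c"
proof -
  define f where "f p = Re (N p * cnj m)" for p
  have mm: "Re (m * cnj m) = 1" using m by (simp add: complex_mult_cnj cmod_def power2_eq_square)
  have l1: "((\<lambda>t. f (p0 + of_real t * v)) \<longlongrightarrow> 1) (at_right 0)"
    unfolding f_def mm[symmetric] by (intro tendsto_intros ray1)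
  have l2: "((\<lambda>t. f (p0 + of_real t * (- v))) \<longlongrightarrow> -1) (at_right 0)"
  proof -
    have "Re (- m * cnj m) = -1" using mm by simp
    then show ?thesis unfolding f_def by (metis (no_types) ray2 tendsto_Re tendsto_mult_right)
  qed
  have ev1: "eventually (\<lambda>t. c < f (p0 + of_real t * v)) (at_right 0)"
    using order_tendstoD(1)[OF l1 c(2)] .
  have ev2: "eventually (\<lambda>t. f (p0 + of_real t * (- v)) < c) (at_right 0)"
    using order_tendstoD(2)[OF l2 c(1)] .
  have ev3: "eventually (\<lambda>t::real. t < \<rho> / cmod v) (at_right 0)"
    by (rule order_tendstoD(2)[OF tendsto_ident_at]) (use \<rho> v in simp)
  have ev4: "eventually (\<lambda>t::real. 0 < t) (at_right 0)" by (rule eventually_at_right_less)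
  obtain t where t: "c < f (p0 + of_real t * v)" "f (p0 + of_real t * (- v)) < c" "t < \<rho> / cmod v" "0 < t"
    using eventually_happens'[OF trivial_limit_at_right_real eventually_conj[OF ev1 eventually_conj[OF ev2 eventually_conj[OF ev3 ev4]]]]
    by blast
  define C where "C = ball p0 \<rho> - {p0}"
  have tv: "t * cmod v < \<rho>" using t(3) v by (simp add: field_simps)
  have p1: "p0 + of_real t * v \<in> C" using t(4) v tv
    unfolding C_def by (simp add: dist_add_self norm_mult)
  have p2: "p0 + of_real t * (- v) \<in> C" using t(4) v tv
    unfolding C_def by (simp add: dist_add_self norm_mult)
  have "connected C" unfolding C_def by (rule connected_punctured_ball) simp
  moreover have "continuous_on C f"
    unfolding f_def
    by (intro continuous_intros continuous_on_subset[OF contN]) (use \<rho> in \<open>auto simp: C_def\<close>)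
  ultimately have "connected (f ` C)" by (metis connected_continuous_image)
  then have "c \<in> f ` C"
    unfolding connected_iff_interval using p1 p2 t(1,2)
    by (meson imageI less_imp_le)
  then obtain p where "p \<in> C" "f p = c" by blast
  then show ?thesis unfolding C_def f_def by (auto simp: dist_commute)
qed


lemma topo:
  fixes N :: "complex \<Rightarrow> complex" and Q :: "complex \<Rightarrow> real"
  assumes Qd: "\<And>n. Q n = al * (Im n)^2 + de * (Re n)^2 - ka * Re n * Im n"
    and contN: "continuous_on (ball p0 r0 - {p0}) N" and r0: "0 < r0"
    and unit: "\<And>p. p \<in> ball p0 r0 - {p0} \<Longrightarrow> cmod (N p) = 1"
    and K: "((\<lambda>p. Q (N p)) \<longlongrightarrow> 0) (at p0)"
    and m: "cmod m = 1" and v: "v \<noteq> 0"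
    and ray1: "((\<lambda>t. N (p0 + of_real t * v)) \<longlongrightarrow> m) (at_right 0)"
    and ray2: "((\<lambda>t. N (p0 + of_real t * (- v))) \<longlongrightarrow> - m) (at_right 0)"
  shows "al = 0 \<and> de = 0 \<and> ka = 0"
proof -
  have Qm: "Q m = 0"
  proof -
    have "((\<lambda>t. p0 + of_real t * v) \<longlongrightarrow> p0 + of_real 0 * v) (at_right 0)"
      by (intro tendsto_intros)
    then have l: "((\<lambda>t. p0 + of_real t * v) \<longlongrightarrow> p0) (at_right 0)" by simp
    have "eventually (\<lambda>t::real. 0 < t) (at_right 0)" by (rule eventually_at_right_less)
    then have "eventually (\<lambda>t. p0 + of_real t * v \<noteq> p0) (at_right 0)"
      by eventually_elim (use v in auto)
    then have fl: "filterlim (\<lambda>t. p0 + of_real t * v) (at p0) (at_right 0)"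
      using filterlim_atI l by blast
    have l0: "((\<lambda>t. Q (N (p0 + of_real t * v))) \<longlongrightarrow> 0) (at_right 0)"
      using filterlim_compose[OF K fl] by (simp add: o_def)
    have "((\<lambda>t. Q (N (p0 + of_real t * v))) \<longlongrightarrow> Q m) (at_right 0)"
      unfolding Qd by (intro tendsto_intros ray1)
    then show ?thesis using l0 tendsto_unique trivial_limit_at_right_real by blast
  qed
  define K where "K = Q (m + \<i> * m) - Q m - Q (\<i> * m)"
  have mne: "m \<noteq> 0" using m by auto
  have mcnj: "cnj m * m = 1" using m by (simp add: complex_mult_cnj cmod_def power2_eq_square mult.commute)
  have decomp: "\<exists>p s. p \<noteq> p0 \<and> dist p p0 < \<rho> \<and> Q (N p) = c * s * K + (1 - c^2) * Q (\<i> * m) \<and> (s = sqrt (1 - c^2) \<or> s = - sqrt (1 - c^2))"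
    if c: "-1 < c" "c < 1" and \<rho>: "\<rho> > 0" for c \<rho>
  proof -
    obtain p where p: "p \<noteq> p0" "dist p p0 < min \<rho> r0" "Re (N p * cnj m) = c"
      using ivt_punctured[OF contN ray1 ray2 m v c, of "min \<rho> r0"] \<rho> r0 by auto
    define w where "w = N p * cnj m"
    have Np: "N p = m * w" unfolding w_def using mcnj by (simp add: algebra_simps)
    have "cmod (N p) = 1" using unit p by (auto simp: dist_commute)
    then have "cmod w = 1" unfolding w_def using m by (simp add: norm_mult)
    then have "(Re w)^2 + (Im w)^2 = 1" unfolding cmod_def by simp
    then have iw: "(Im w)^2 = 1 - c^2" using p(3) unfolding w_def by simp
    then have "Im w = sqrt (1 - c^2) \<or> Im w = - sqrt (1 - c^2)"
    proof -
      have "sqrt (1 - c^2) = \<bar>Im w\<bar>" unfolding iw[symmetric] by simp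
      then show ?thesis by (cases "Im w \<ge> 0") auto
    qed
    moreover have "Q (N p) = c * Im w * K + (1 - c^2) * Q (\<i> * m)"
    proof -
      have rw: "Re w = c" using p(3) unfolding w_def .
      have "Q (N p) = (Re w)^2 * Q m + Re w * Im w * K + (Im w)^2 * Q (\<i> * m)"
        unfolding Np K_def by (rule quad_expand[OF Qd])
      then show ?thesis unfolding Qm iw rw by simp
    qed
    ultimately show ?thesis using p(1) p(2) by (intro exI[of _ p] exI[of _ "Im w"]) auto
  qed
  have Qim0: "\<bar>Q (\<i> * m)\<bar> = 0"
  proof (rule value_near_zero[OF K])
    fix \<rho> :: real assume "\<rho> > 0"
    from decomp[of 0 \<rho>, OF _ _ this] obtain p s where "p \<noteq> p0" "dist p p0 < \<rho>"
        "Q (N p) = 0 * s * K + (1 - 0^2) * Q (\<i> * m)"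
      by auto
    then show "\<exists>p. p \<noteq> p0 \<and> dist p p0 < \<rho> \<and> \<bar>Q (N p)\<bar> = \<bar>Q (\<i> * m)\<bar>" by auto
  qed
  then have Qim: "Q (\<i> * m) = 0" by simp
  have K0: "12/25 * \<bar>K\<bar> = 0"
  proof (rule value_near_zero[OF K])
    fix \<rho> :: real assume "\<rho> > 0"
    from decomp[of "3/5" \<rho>, OF _ _ this] obtain p s where ps: "p \<noteq> p0" "dist p p0 < \<rho>"
      "Q (N p) = 3/5 * s * K" "s = sqrt (1 - (3/5)^2) \<or> s = - sqrt (1 - (3/5)^2)"
      using Qim by auto
    have sq: "sqrt (1 - (3/5)^2) = (4/5::real)"
      by (rule real_sqrt_unique) (simp_all add: power2_eq_square)
    have "s = 4/5 \<or> s = - (4/5)" using ps(4) unfolding sq .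
    then have "Q (N p) = 12/25 * K \<or> Q (N p) = - (12/25 * K)"
    proof
      assume h: "s = 4/5"
      have "Q (N p) = 3/5 * (4/5) * K" using ps(3) unfolding h .
      then show ?thesis by simp
    next
      assume h: "s = - (4/5)"
      have "Q (N p) = 3/5 * (- (4/5)) * K" using ps(3) unfolding h .
      then show ?thesis by simp
    qed
    then have "\<bar>Q (N p)\<bar> = 12/25 * \<bar>K\<bar>" by (auto simp: abs_mult)
    then show "\<exists>p. p \<noteq> p0 \<and> dist p p0 < \<rho> \<and> \<bar>Q (N p)\<bar> = 12/25 * \<bar>K\<bar>" using ps by auto
  qed
  have Qall: "Q n = 0" for n
  proof -
    have "m * (cnj m * n) = (cnj m * m) * n" by (simp only: ac_simps)
    also have "\<dots> = n" unfolding mcnj by simp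
    finally have e: "m * (cnj m * n) = n" .
    have "Q n = Q (m * (cnj m * n))" by (simp only: e)
    also have "\<dots> = (Re (cnj m * n))^2 * Q m + Re (cnj m * n) * Im (cnj m * n) * K + (Im (cnj m * n))^2 * Q (\<i> * m)"
      unfolding K_def by (rule quad_expand[OF Qd])
    also have "\<dots> = 0" unfolding Qm Qim using K0 by simp
    finally show ?thesis .
  qed
  have "Q 1 = de" "Q \<i> = al" "Q (1 + \<i>) = al + de - ka" unfolding Qd by simp_all
  then show ?thesis using Qall by (metis add.right_neutral add_0 diff_0 neg_equal_0_iff_equal)
qed


lemma has_derivative_Complex:
  fixes f g :: "'a::real_normed_vector \<Rightarrow> real"
  assumes "(f has_derivative f') F" "(g has_derivative g') F"
  shows "((\<lambda>x. Complex (f x) (g x)) has_derivative (\<lambda>h. Complex (f' h) (g' h))) F"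
proof -
  have "((\<lambda>x. of_real (f x) + \<i> * of_real (g x)) has_derivative (\<lambda>h. of_real (f' h) + \<i> * of_real (g' h))) F"
    by (intro has_derivative_add has_derivative_mult_right has_derivative_of_real assms)
  moreover have "(\<lambda>x. Complex (f x) (g x)) = (\<lambda>x. of_real (f x) + \<i> * of_real (g x))"
    by (simp add: Complex_eq)
  moreover have "(\<lambda>h. Complex (f' h) (g' h)) = (\<lambda>h. of_real (f' h) + \<i> * of_real (g' h))"
    by (simp add: Complex_eq)
  ultimately show ?thesis by simp
qed

lemma quad_bound:
  fixes x y a d k :: real
  assumes "\<bar>x\<bar> \<le> 1" "\<bar>y\<bar> \<le> 1"
  shows "\<bar>a * y^2 + d * x^2 - k * x * y\<bar> \<le> \<bar>a\<bar> + \<bar>d\<bar> + \<bar>k\<bar>"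
proof -
  have y2: "\<bar>y^2\<bar> \<le> 1" using assms by (simp add: abs_square_le_1)
  have x2: "\<bar>x^2\<bar> \<le> 1" using assms by (simp add: abs_square_le_1)
  have xy: "\<bar>x * y\<bar> \<le> 1" using assms by (simp add: abs_mult mult_le_one)
  have "\<bar>a * y^2\<bar> \<le> \<bar>a\<bar>" using y2 by (simp add: abs_mult mult_left_le)
  moreover have "\<bar>d * x^2\<bar> \<le> \<bar>d\<bar>" using x2 by (simp add: abs_mult mult_left_le)
  moreover have "\<bar>k * x * y\<bar> \<le> \<bar>k\<bar>" using xy by (simp add: abs_mult mult_left_le mult.assoc)
  ultimately show ?thesis by linarith
qed

lemma ray_lemma:
  fixes F :: "complex \<Rightarrow> complex"
  assumes dF: "(F has_derivative A) (at p0)" and F0: "F p0 = 0" and Av: "A v \<noteq> 0"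
  shows "((\<lambda>t. F (p0 + of_real t * v) / of_real (cmod (F (p0 + of_real t * v))))
           \<longlongrightarrow> A v / of_real (cmod (A v))) (at_right 0)"
proof -
  define G where "G t = F (p0 + of_real t * v)" for t :: real
  have lin: "linear A" using dF has_derivative_linear by blast
  have l: "((\<lambda>t. p0 + of_real t * v) has_derivative (\<lambda>s. of_real s * v)) (at 0)"
    by (auto intro!: derivative_eq_intros)
  have dF': "(F has_derivative A) (at (p0 + of_real 0 * v))" using dF by simp
  have dG: "(G has_derivative (\<lambda>s. A (of_real s * v))) (at 0)"
    unfolding G_def using has_derivative_compose[OF l dF'] by (simp add: o_def)
  have As: "A (of_real s * v) = s *\<^sub>R A v" for s
    using linear_scale[OF lin, of s v] by (simp add: scaleR_conv_of_real)
  have dG': "(G has_derivative (\<lambda>s. s *\<^sub>R A v)) (at_right 0)"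
    using has_derivative_at_withinI[OF dG[unfolded As]] by simp
  have G0: "G 0 = 0" unfolding G_def using F0 by simp
  have lim0: "((\<lambda>t. ((G t - G 0) - (t - 0) *\<^sub>R A v) /\<^sub>R norm (t - 0)) \<longlongrightarrow> 0) (at_right 0)"
    using dG' unfolding has_derivative_at_within by blast
  have ev: "eventually (\<lambda>t. ((G t - G 0) - (t - 0) *\<^sub>R A v) /\<^sub>R norm (t - 0) = inverse t *\<^sub>R G t - A v) (at_right 0)"
  proof -
    have "eventually (\<lambda>t::real. 0 < t) (at_right 0)" by (rule eventually_at_right_less)
    then show ?thesis
      by eventually_elim (simp add: G0 scaleR_diff_right)
  qed
  have lim00: "((\<lambda>t. inverse t *\<^sub>R G t - A v) \<longlongrightarrow> 0) (at_right 0)"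
    using Lim_transform_eventually[OF lim0 ev] .
  then have lim1: "((\<lambda>t. inverse t *\<^sub>R G t) \<longlongrightarrow> A v) (at_right 0)"
    using tendsto_add[OF lim00 tendsto_const[of "A v"]] by simp
  have lim2: "((\<lambda>t. (inverse t *\<^sub>R G t) / of_real (cmod (inverse t *\<^sub>R G t))) \<longlongrightarrow> A v / of_real (cmod (A v))) (at_right 0)"
    using Av by (intro tendsto_intros lim1) simp
  have ev2: "eventually (\<lambda>t. (inverse t *\<^sub>R G t) / of_real (cmod (inverse t *\<^sub>R G t)) = G t / of_real (cmod (G t))) (at_right 0)"
  proof -
    have "eventually (\<lambda>t::real. 0 < t) (at_right 0)" by (rule eventually_at_right_less)
    then show ?thesis
    proof eventually_elim
      case (elim t)
      show ?case
      proof (cases "G t = 0")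
        case True then show ?thesis by simp
      next
        case False
        have "cmod (inverse t *\<^sub>R G t) = inverse t * cmod (G t)" using elim by simp
        then show ?thesis using elim False by (simp add: scaleR_conv_of_real field_simps flip: of_real_mult)
      qed
    qed
  qed
  show ?thesis using Lim_transform_eventually[OF lim2 ev2] unfolding G_def .
qed


theorem lemma3p8:
  fixes \<Omega> :: "complex set" and u :: "complex \<Rightarrow> real" and p0 :: complex
  assumes "open \<Omega>" and "connected \<Omega>"
    and "C2_on \<Omega> u"
    and "p0 \<in> Sset \<Omega> u"
    and "\<exists>\<epsilon>>0. ball p0 \<epsilon> \<inter> Sset \<Omega> u = {p0}"
    and "Hfun u \<in> o[at p0](\<lambda>p. 1 / cmod (p - p0))"
  shows "(NperpD u has_derivative id) (at p0)
    \<and> vf_index_eq (NperpD u) p0 1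
    \<and> px (px u) p0 = 0 \<and> py (px u) p0 = 0 \<and> py (py u) p0 = 0"
proof -
  have du: "\<forall>z\<in>\<Omega>. u differentiable (at z)" and dxu: "\<forall>z\<in>\<Omega>. px u differentiable (at z)"
    and dyu: "\<forall>z\<in>\<Omega>. py u differentiable (at z)"
    and c1: "continuous_on \<Omega> (px (px u))" and c2: "continuous_on \<Omega> (py (px u))"
    and c3: "continuous_on \<Omega> (px (py u))" and c4: "continuous_on \<Omega> (py (py u))"
    using assms(3) unfolding C2_on_def by auto
  have p0\<Omega>: "p0 \<in> \<Omega>" and S0: "px u p0 - Im p0 = 0" "py u p0 + Re p0 = 0"
    using assms(4) unfolding Sset_def by auto
  obtain \<epsilon> where \<epsilon>: "\<epsilon> > 0" "ball p0 \<epsilon> \<inter> Sset \<Omega> u = {p0}" using assms(5) by blast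
  obtain r1 where r1: "r1 > 0" "ball p0 r1 \<subseteq> \<Omega>" using assms(1) p0\<Omega> openE by blast
  define r0 where "r0 = min \<epsilon> r1"
  have r0: "r0 > 0" unfolding r0_def using \<epsilon> r1 by simp
  have sub\<Omega>: "ball p0 r0 \<subseteq> \<Omega>" using r1 unfolding r0_def by auto
  define \<alpha> where "\<alpha> = px (px u) p0"
  define \<gamma> where "\<gamma> = py (px u) p0"
  define \<beta> where "\<beta> = px (py u) p0"
  define \<delta> where "\<delta> = py (py u) p0"
  have sym: "\<gamma> = \<beta>" unfolding \<gamma>_def \<beta>_def
    by (rule schwarz[OF assms(1) p0\<Omega> du]) (use dxu dyu p0\<Omega> in auto)
  define F where "F w = Complex (px u w - Im w) (py u w + Re w)" for w
  have DF: "Dfun u w = cmod (F w)" for w by (simp add: Dfun_def F_def cmod_def)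
  define N where "N w = F w / of_real (cmod (F w))" for w
  have F0: "F p0 = 0" unfolding F_def using S0 by (simp add: Complex_eq_0)
  have Fne: "F p \<noteq> 0" if p: "p \<in> ball p0 r0 - {p0}" for p
  proof
    assume "F p = 0"
    then have "px u p - Im p = 0" "py u p + Re p = 0" unfolding F_def by (simp_all add: Complex_eq_0)
    moreover have "p \<in> \<Omega>" using p sub\<Omega> by auto
    ultimately have "p \<in> Sset \<Omega> u" unfolding Sset_def by simp
    moreover have "p \<in> ball p0 \<epsilon>" using p unfolding r0_def by auto
    ultimately have "p = p0" using \<epsilon>(2) by blast
    then show False using p by simp
  qed
  have unit: "cmod (N p) = 1" if "p \<in> ball p0 r0 - {p0}" for p
    using Fne[OF that] unfolding N_def by (simp add: norm_divide)
  have dF: "(F has_derivative (\<lambda>h. Complex (Re h * px (px u) p + Im h * py (px u) p - Im h)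
              (Re h * px (py u) p + Im h * py (py u) p + Re h))) (at p)" if "p \<in> \<Omega>" for p
    unfolding F_def[abs_def]
    by (rule has_derivative_Complex[OF F1_deriv F2_deriv]) (use that dxu dyu in auto)
  have contF: "continuous_on \<Omega> F"
    by (rule continuous_at_imp_continuous_on) (use dF has_derivative_continuous in blast)
  have contN: "continuous_on (ball p0 r0 - {p0}) N"
  proof -
    have cF: "continuous_on (ball p0 r0 - {p0}) F" using continuous_on_subset[OF contF] sub\<Omega> by blast
    show ?thesis unfolding N_def
      by (intro continuous_intros cF) (use Fne in auto)
  qed
  define A where "A h = Complex (Re h * \<alpha> + Im h * \<gamma> - Im h) (Re h * \<beta> + Im h * \<delta> + Re h)" for h
  have dF0: "(F has_derivative A) (at p0)"
    using dF[OF p0\<Omega>] unfolding A_def[abs_def] \<alpha>_def \<beta>_def \<gamma>_def \<delta>_def .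
  define Q where "Q n = \<alpha> * (Im n)^2 + \<delta> * (Re n)^2 - (\<beta> + \<gamma>) * Re n * Im n" for n
  define Qp where "Qp p n = px (px u) p * (Im n)^2 + py (py u) p * (Re n)^2
      - (px (py u) p + py (px u) p) * Re n * Im n" for p n
  have HD_eq: "Hfun u p * Dfun u p = Qp p (N p)" if p: "p \<in> ball p0 r0 - {p0}" for p
  proof -
    have p\<Omega>: "p \<in> \<Omega>" using p sub\<Omega> by auto
    have D0: "Dfun u p \<noteq> 0" unfolding DF using Fne[OF p] by simp
    have "Re (N p) = (px u p - Im p) / Dfun u p" "Im (N p) = (py u p + Re p) / Dfun u p"
      unfolding N_def DF by (simp_all add: F_def)
    then show ?thesis unfolding Qp_def
      using H_formula[of u p] dxu dyu p\<Omega> D0 by (simp add: algebra_simps)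
  qed
  have HD: "((\<lambda>p. Hfun u p * Dfun u p) \<longlongrightarrow> 0) (at p0)"
  proof -
    have "bounded_linear A" using dF0 has_derivative_bounded_linear by blast
    then obtain B where B: "B > 0" "\<And>h. norm (A h) \<le> norm h * B"
      using bounded_linear.pos_bounded by blast
    obtain d where d: "d > 0" "\<And>y. norm (y - p0) < d \<Longrightarrow> norm (F y - F p0 - A (y - p0)) \<le> 1 * norm (y - p0)"
      using dF0 unfolding has_derivative_at_alt by (meson zero_less_one)
    have Fb: "cmod (F y) \<le> (B + 1) * norm (y - p0)" if "norm (y - p0) < d" for y
    proof -
      have "cmod (F y) \<le> norm (F y - F p0 - A (y - p0)) + norm (A (y - p0))"
        using F0 norm_triangle_ineq[of "F y - A (y - p0)" "A (y - p0)"] by simp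
      also have "\<dots> \<le> 1 * norm (y - p0) + norm (y - p0) * B" using d(2)[OF that] B(2)[of "y - p0"] by linarith
      finally show ?thesis by (simp add: algebra_simps)
    qed
    show ?thesis
    proof (rule tendstoI)
      fix e :: real assume e: "e > 0"
      define c where "c = e / (2 * (B + 1))"
      have c: "c > 0" unfolding c_def using e B by simp
      have ev1: "eventually (\<lambda>p. norm (Hfun u p) \<le> c * norm (1 / cmod (p - p0))) (at p0)"
        using landau_o.smallD[OF assms(6) c] .
      have ev2: "eventually (\<lambda>p. p \<noteq> p0 \<and> dist p p0 < d) (at p0)"
        unfolding eventually_at using d(1) by blast
      show "eventually (\<lambda>p. dist (Hfun u p * Dfun u p) 0 < e) (at p0)"
        using ev1 ev2
      proof eventually_elim
        case (elim p)
        have np: "norm (p - p0) > 0" "norm (p - p0) < d" using elim(2) by (auto simp: dist_norm)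
        have "\<bar>Hfun u p * Dfun u p\<bar> = \<bar>Hfun u p\<bar> * cmod (F p)" unfolding DF by (simp add: abs_mult)
        also have "\<dots> \<le> (c / norm (p - p0)) * ((B + 1) * norm (p - p0))"
          using elim(1) Fb[OF np(2)] np(1) by (intro mult_mono) (auto simp: norm_divide)
        also have "\<dots> = c * (B + 1)" using np(1) by simp
        also have "\<dots> = e / 2" unfolding c_def using B by (simp add: field_simps)
        also have "\<dots> < e" using e by simp
        finally show ?case by simp
      qed
    qed
  qed
  have lim2: "(px (px u) \<longlongrightarrow> \<alpha>) (at p0)" "(py (px u) \<longlongrightarrow> \<gamma>) (at p0)"
       "(px (py u) \<longlongrightarrow> \<beta>) (at p0)" "(py (py u) \<longlongrightarrow> \<delta>) (at p0)"
    using c1 c2 c3 c4 p0\<Omega> assms(1)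
    unfolding \<alpha>_def \<beta>_def \<gamma>_def \<delta>_def continuous_on_eq_continuous_at[OF assms(1)] isCont_def
    by auto
  have diff: "((\<lambda>p. Qp p (N p) - Q (N p)) \<longlongrightarrow> 0) (at p0)"
  proof (rule tendsto_0_le)
    let ?f = "\<lambda>p. \<bar>px (px u) p - \<alpha>\<bar> + \<bar>py (py u) p - \<delta>\<bar> + \<bar>(px (py u) p + py (px u) p) - (\<beta> + \<gamma>)\<bar>"
    have "((\<lambda>p. ?f p) \<longlongrightarrow> \<bar>\<alpha> - \<alpha>\<bar> + \<bar>\<delta> - \<delta>\<bar> + \<bar>(\<beta> + \<gamma>) - (\<beta> + \<gamma>)\<bar>) (at p0)"
      by (intro tendsto_intros lim2)
    then show "(?f \<longlongrightarrow> 0) (at p0)" by simp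
    have ev: "eventually (\<lambda>p. p \<in> ball p0 r0 - {p0}) (at p0)"
      unfolding eventually_at using r0 by (auto simp: dist_commute)
    show "eventually (\<lambda>p. norm (Qp p (N p) - Q (N p)) \<le> norm (?f p) * 1) (at p0)"
      using ev
    proof eventually_elim
      case (elim p)
      have n: "cmod (N p) = 1" using unit[OF elim] .
      have x: "\<bar>Re (N p)\<bar> \<le> 1" using abs_Re_le_cmod[of "N p"] n by simp
      have y: "\<bar>Im (N p)\<bar> \<le> 1" using abs_Im_le_cmod[of "N p"] n by simp
      have "Qp p (N p) - Q (N p) = (px (px u) p - \<alpha>) * (Im (N p))^2 + (py (py u) p - \<delta>) * (Re (N p))^2
          - ((px (py u) p + py (px u) p) - (\<beta> + \<gamma>)) * Re (N p) * Im (N p)"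
        unfolding Qp_def Q_def by (simp add: algebra_simps)
      then have "\<bar>Qp p (N p) - Q (N p)\<bar> \<le> ?f p"
        using quad_bound[OF x y] by simp
      then show ?case by simp
    qed
  qed
  have K: "((\<lambda>p. Q (N p)) \<longlongrightarrow> 0) (at p0)"
  proof -
    have ev: "eventually (\<lambda>p. Hfun u p * Dfun u p - (Qp p (N p) - Q (N p)) = Q (N p)) (at p0)"
    proof -
      have "eventually (\<lambda>p. p \<in> ball p0 r0 - {p0}) (at p0)"
        unfolding eventually_at using r0 by (auto simp: dist_commute)
      then show ?thesis by eventually_elim (simp add: HD_eq)
    qed
    have "((\<lambda>p. Hfun u p * Dfun u p - (Qp p (N p) - Q (N p))) \<longlongrightarrow> 0 - 0) (at p0)"
      by (intro tendsto_diff HD diff)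
    then show ?thesis using Lim_transform_eventually[OF _ ev] by simp
  qed
  obtain v where v: "v \<noteq> 0" "A v \<noteq> 0"
  proof (cases "A 1 = 0")
    case True
    then have "\<beta> = -1" unfolding A_def by (simp add: Complex_eq_0)
    then have "A \<i> \<noteq> 0" using sym unfolding A_def by (simp add: Complex_eq_0)
    then show ?thesis using that[of \<i>] by simp
  next
    case False
    then show ?thesis using that[of 1] by simp
  qed
  have linA: "linear A" using dF0 has_derivative_linear by blast
  define m where "m = A v / of_real (cmod (A v))"
  have m: "cmod m = 1" unfolding m_def using v by (simp add: norm_divide)
  have ray1: "((\<lambda>t. N (p0 + of_real t * v)) \<longlongrightarrow> m) (at_right 0)"
    unfolding N_def m_def by (rule ray_lemma[OF dF0 F0 v(2)])
  have Amv: "A (- v) = - A v" using linear_neg[OF linA] .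
  have ray2: "((\<lambda>t. N (p0 + of_real t * (- v))) \<longlongrightarrow> - m) (at_right 0)"
  proof -
    have "A (- v) \<noteq> 0" using Amv v by simp
    from ray_lemma[OF dF0 F0 this] show ?thesis
      unfolding N_def m_def Amv by simp
  qed
  have coef: "\<alpha> = 0 \<and> \<delta> = 0 \<and> \<beta> + \<gamma> = 0"
    by (rule topo[OF Q_def contN r0 unit K m v(1) ray1 ray2]) 
  then have z: "\<alpha> = 0" "\<delta> = 0" "\<beta> = 0" "\<gamma> = 0" using sym by auto
  have dV: "(NperpD u has_derivative id) (at p0)"
  proof -
    have d2: "((\<lambda>w. py u w + Re w) has_derivative (\<lambda>h. Re h * \<beta> + Im h * \<delta> + Re h)) (at p0)"
      unfolding \<beta>_def \<delta>_def by (rule F2_deriv) (use dyu p0\<Omega> in auto)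
    have d1: "((\<lambda>w. px u w - Im w) has_derivative (\<lambda>h. Re h * \<alpha> + Im h * \<gamma> - Im h)) (at p0)"
      unfolding \<alpha>_def \<gamma>_def by (rule F1_deriv) (use dxu p0\<Omega> in auto)
    have d1': "((\<lambda>w. - (px u w - Im w)) has_derivative (\<lambda>h. - (Re h * \<alpha> + Im h * \<gamma> - Im h))) (at p0)"
      by (rule has_derivative_minus[OF d1])
    have "((\<lambda>w. Complex (py u w + Re w) (- (px u w - Im w))) has_derivative
        (\<lambda>h. Complex (Re h * \<beta> + Im h * \<delta> + Re h) (- (Re h * \<alpha> + Im h * \<gamma> - Im h)))) (at p0)"
      by (rule has_derivative_Complex[OF d2 d1'])
    moreover have "(\<lambda>w. Complex (py u w + Re w) (- (px u w - Im w))) = NperpD u"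
      unfolding NperpD_def[abs_def] by (simp add: fun_eq_iff)
    moreover have "(\<lambda>h. Complex (Re h * \<beta> + Im h * \<delta> + Re h) (- (Re h * \<alpha> + Im h * \<gamma> - Im h))) = id"
      unfolding z by (simp add: fun_eq_iff complex_eq_iff)
    ultimately show ?thesis by simp
  qed
  have idx: "vf_index_eq (NperpD u) p0 1"
  proof -
    define V where "V = NperpD u"
    have V0: "V p0 = 0" unfolding V_def NperpD_def using S0 by (simp add: Complex_eq_0)
    obtain d where d: "d > 0" "\<And>y. norm (y - p0) < d \<Longrightarrow> norm (V y - V p0 - id (y - p0)) \<le> 1/2 * norm (y - p0)"
      using dV unfolding V_def has_derivative_at_alt by (meson half_gt_zero zero_less_one)
    have dVp: "V differentiable (at p)" if "p \<in> \<Omega>" for p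
    proof -
      have d2: "(\<lambda>w. py u w + Re w) differentiable (at p)"
        using F2_deriv[of u p] dyu that differentiable_def by blast
      have d1: "(\<lambda>w. - px u w + Im w) differentiable (at p)"
      proof -
        have "((\<lambda>w. - (px u w - Im w)) has_derivative (\<lambda>h. - (Re h * px (px u) p + Im h * py (px u) p - Im h))) (at p)"
          by (rule has_derivative_minus[OF F1_deriv[of u p]]) (use dxu that in auto)
        moreover have "(\<lambda>w. - (px u w - Im w)) = (\<lambda>w. - px u w + Im w)" by (simp add: fun_eq_iff)
        ultimately show ?thesis unfolding differentiable_def by metis
      qed
      from d1 d2 obtain f1 f2 where "((\<lambda>w. py u w + Re w) has_derivative f2) (at p)"
        "((\<lambda>w. - px u w + Im w) has_derivative f1) (at p)" unfolding differentiable_def by blast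
      from has_derivative_Complex[OF this] show ?thesis
        unfolding V_def NperpD_def[abs_def] differentiable_def by blast
    qed
    have contV: "continuous_on \<Omega> V"
      by (rule continuous_at_imp_continuous_on) (use dVp differentiable_imp_continuous_within in blast)
    show ?thesis unfolding vf_index_eq_def V_def[symmetric]
    proof (intro exI[of _ "min d r1"] conjI allI impI)
      show "min d r1 > 0" using d r1 by simp
      fix r assume r: "0 < r \<and> r < min d r1"
      define g where "g = circlepath 0 r"
      define h where "h = V \<circ> circlepath p0 r"
      have sph: "circlepath p0 r t \<in> sphere p0 r" if "t \<in> {0..1}" for t
        using path_image_circlepath[of p0 r] r that unfolding path_image_def by auto
      have gt: "g t = circlepath p0 r t - p0" for t
        unfolding g_def circlepath_def part_circlepath_def by simp
      have "path h" unfolding h_def path_def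
      proof (rule continuous_on_compose)
        show "continuous_on {0..1} (circlepath p0 r)" using path_circlepath unfolding path_def .
        have "circlepath p0 r ` {0..1} \<subseteq> \<Omega>"
          using sph r r1 by (force simp: dist_commute)
        then show "continuous_on (circlepath p0 r ` {0..1}) V"
          using continuous_on_subset[OF contV] by blast
      qed
      moreover have "path g" unfolding g_def by simp
      moreover have "pathfinish g = pathstart g" unfolding g_def by simp
      moreover have "pathfinish h = pathstart h"
        unfolding h_def pathfinish_def pathstart_def
        using pathfinish_circlepath[of p0 r] pathstart_circlepath[of p0 r]
        unfolding pathfinish_def pathstart_def by simp
      moreover have "norm (h t - g t) < norm (g t - 0)" if t: "t \<in> {0..1}" for t
      proof -
        define q where "q = circlepath p0 r t"
        have nq: "norm (q - p0) = r" using sph[OF t] r unfolding q_def by (simp add: dist_norm norm_minus_commute)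
        have "norm (V q - V p0 - id (q - p0)) \<le> 1/2 * norm (q - p0)"
          using d(2)[of q] nq r by simp
        then have "norm (V q - (q - p0)) \<le> r / 2" using V0 nq by simp
        moreover have "h t = V q" unfolding h_def q_def by simp
        moreover have "g t = q - p0" unfolding gt q_def ..
        ultimately show ?thesis using nq r by simp
      qed
      ultimately have "winding_number h 0 = winding_number g 0"
        by (intro winding_number_nearby_loops_eq) auto
      also have "\<dots> = 1" unfolding g_def using r by (simp add: winding_number_circlepath_centre)
      finally show "winding_number (V \<circ> circlepath p0 r) 0 = of_int 1" unfolding h_def by simp
    qed
  qed
  show ?thesis using dV idx z unfolding \<alpha>_def \<gamma>_def \<delta>_def by simp
qed


end
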